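(* For all $x_1,x_2\ge0$ and $0\le\nu\le\frac12$, $$\sqrt{x_1x_2}\,\left|J_{-\nu}(x_1)J_\nu(x_2)-J_{-\nu}(x_2)J_\nu(x_1)\right|\le\frac{2}{\pi}\sin\pi\nu.$$
   Context: $J_\nu$ and $J_{-\nu}$ denote Bessel functions of the first kind of orders $\nu$ and $-\nu$. *)

theory Defs
  imports "HOL-Analysis.Analysis"
begin

text \<open>Bessel function of the first kind of real order nu, via its power series
  J_nu(x) = sum_k (-1)^k / (k! Gamma(k+nu+1)) (x/2)^(2k+nu), for x > 0.
  1/Gamma is written with rGamma (which is 0 at the poles of Gamma, the standard
  convention). At x = 0 we use the limiting value for nu \<ge> 0 (1 if nu = 0, else 0);
  for nu < 0 the function is singular at 0 and the value is a convention.\<close>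
definition bessel_J :: "real \<Rightarrow> real \<Rightarrow> real" where
  "bessel_J \<nu> x =
     (if x = 0 then (if \<nu> = 0 then 1 else 0)
      else (x / 2) powr \<nu> *
        (\<Sum>k. (-1) ^ k * rGamma (real k + \<nu> + 1) / fact k * (x / 2) ^ (2 * k)))"

end

theory Submission
  imports Defs
begin

definition coef :: "real \<Rightarrow> nat \<Rightarrow> real" where
  "coef \<mu> k = (-1) ^ k * rGamma (real k + \<mu> + 1) / fact k"

definition S :: "real \<Rightarrow> real \<Rightarrow> real" where
  "S \<mu> y = (\<Sum>k. coef \<mu> k * y ^ k)"

lemma coef_Suc:
  assumes "\<mu> > -1"
  shows "coef \<mu> (Suc k) = - coef \<mu> k / ((real k + 1) * (real k + \<mu> + 1))"
proof -
  have z: "real k + \<mu> + 1 > 0" using assms by simp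
  have "rGamma (real (Suc k) + \<mu> + 1) = rGamma (real k + \<mu> + 1) / (real k + \<mu> + 1)"
    using rGamma_plus1[of "real k + \<mu> + 1"] z by (simp add: field_simps add_ac)
  then have "coef \<mu> (Suc k) = (-1) ^ Suc k * (rGamma (real k + \<mu> + 1) / (real k + \<mu> + 1)) / fact (Suc k)"
    unfolding coef_def by simp
  also have "\<dots> = - ((-1) ^ k * rGamma (real k + \<mu> + 1) / fact k) / ((real k + 1) * (real k + \<mu> + 1))"
    using z by (simp add: fact_Suc field_simps)
  finally show ?thesis unfolding coef_def .
qed

lemma coef_summable:
  assumes "\<mu> \<ge> -1/2"
  shows "summable (\<lambda>k. coef \<mu> k * y ^ k)"
proof (rule summable_ratio_test[where c="1/2" and N="nat \<lceil>4 * \<bar>y\<bar>\<rceil>"])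
  fix n assume n: "n \<ge> nat \<lceil>4 * \<bar>y\<bar>\<rceil>"
  then have n': "real n \<ge> 4 * \<bar>y\<bar>" by linarith
  have pos: "(real n + 1) * (real n + \<mu> + 1) > 0" using assms by (simp add: add_pos_pos)
  have big: "(real n + 1) * (real n + \<mu> + 1) \<ge> 2 * \<bar>y\<bar>"
  proof -
    have "(real n + 1) * (real n + \<mu> + 1) \<ge> (real n + 1) * (1/2)"
      using assms by (intro mult_left_mono) auto
    moreover have "(real n + 1) * (1/2) \<ge> 2 * \<bar>y\<bar>" using n' by simp
    ultimately show ?thesis by linarith
  qed
  have "norm (coef \<mu> (Suc n) * y ^ Suc n) = \<bar>coef \<mu> n * y ^ n\<bar> * (\<bar>y\<bar> / ((real n + 1) * (real n + \<mu> + 1)))"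
    using assms pos by (simp add: coef_Suc abs_mult abs_divide field_simps)
  also have "\<dots> \<le> \<bar>coef \<mu> n * y ^ n\<bar> * (1/2)"
    using big pos by (intro mult_left_mono) (auto simp: field_simps)
  finally show "norm (coef \<mu> (Suc n) * y ^ Suc n) \<le> 1/2 * norm (coef \<mu> n * y ^ n)" by simp
qed simp

definition S1 :: "real \<Rightarrow> real \<Rightarrow> real" where
  "S1 \<mu> y = (\<Sum>k. diffs (coef \<mu>) k * y ^ k)"
definition S2 :: "real \<Rightarrow> real \<Rightarrow> real" where
  "S2 \<mu> y = (\<Sum>k. diffs (diffs (coef \<mu>)) k * y ^ k)"

lemma coef1_summable:
  assumes "\<mu> \<ge> -1/2"
  shows "summable (\<lambda>k. diffs (coef \<mu>) k * y ^ k)"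
  by (rule termdiff_converges_all) (rule coef_summable[OF assms])

lemma coef2_summable:
  assumes "\<mu> \<ge> -1/2"
  shows "summable (\<lambda>k. diffs (diffs (coef \<mu>)) k * y ^ k)"
  by (rule termdiff_converges_all) (rule coef1_summable[OF assms])

lemma S_deriv: assumes "\<mu> \<ge> -1/2" shows "(S \<mu> has_real_derivative S1 \<mu> y) (at y)"
  unfolding S_def S1_def
  by (rule termdiffs_strong_converges_everywhere) (rule coef_summable[OF assms])

lemma S1_deriv: assumes "\<mu> \<ge> -1/2" shows "(S1 \<mu> has_real_derivative S2 \<mu> y) (at y)"
  unfolding S2_def S1_def
  by (rule termdiffs_strong_converges_everywhere) (rule coef1_summable[OF assms])

lemma S_chain:
  assumes "\<mu> \<ge> -1/2" "(g has_real_derivative g') (at x)"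
  shows "((\<lambda>x. S \<mu> (g x)) has_real_derivative S1 \<mu> (g x) * g') (at x)"
  using DERIV_chain2[OF S_deriv[OF assms(1)] assms(2)] .

lemma S1_chain:
  assumes "\<mu> \<ge> -1/2" "(g has_real_derivative g') (at x)"
  shows "((\<lambda>x. S1 \<mu> (g x)) has_real_derivative S2 \<mu> (g x) * g') (at x)"
  using DERIV_chain2[OF S1_deriv[OF assms(1)] assms(2)] .

lemma S_ode:
  assumes "\<mu> \<ge> -1/2"
  shows "y * S2 \<mu> y + (\<mu> + 1) * S1 \<mu> y + S \<mu> y = 0"
proof -
  define g where "g m = real m * (real m + 1) * coef \<mu> (Suc m) * y ^ m" for m
  have "(\<lambda>k. diffs (diffs (coef \<mu>)) k * y ^ k * y) sums (S2 \<mu> y * y)"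
    unfolding S2_def by (intro sums_mult2 summable_sums coef2_summable assms)
  moreover have "(\<lambda>k. diffs (diffs (coef \<mu>)) k * y ^ k * y) = (\<lambda>k. g (Suc k))"
    by (auto simp: g_def diffs_def algebra_simps)
  ultimately have "(\<lambda>k. g (Suc k)) sums (S2 \<mu> y * y)" by simp
  then have 1: "g sums (y * S2 \<mu> y)" by (subst (asm) sums_Suc_iff) (simp add: g_def mult.commute)
  have 2: "(\<lambda>k. (\<mu> + 1) * (diffs (coef \<mu>) k * y ^ k)) sums ((\<mu> + 1) * S1 \<mu> y)"
    unfolding S1_def by (intro sums_mult summable_sums coef1_summable assms)
  have 3: "(\<lambda>k. coef \<mu> k * y ^ k) sums (S \<mu> y)"
    unfolding S_def by (intro summable_sums coef_summable assms)
  have "(\<lambda>k. g k + (\<mu> + 1) * (diffs (coef \<mu>) k * y ^ k) + coef \<mu> k * y ^ k) sums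
        (y * S2 \<mu> y + (\<mu> + 1) * S1 \<mu> y + S \<mu> y)"
    by (intro sums_add 1 2 3)
  moreover have "(\<lambda>k. g k + (\<mu> + 1) * (diffs (coef \<mu>) k * y ^ k) + coef \<mu> k * y ^ k) = (\<lambda>k. 0)"
  proof
    fix k
    have "real k + 1 > 0" "real k + \<mu> + 1 > 0" using assms by simp_all
    then have pos: "(real k + 1) * (real k + \<mu> + 1) \<noteq> 0" by simp
    have "g k + (\<mu> + 1) * (diffs (coef \<mu>) k * y ^ k) + coef \<mu> k * y ^ k
       = ((real k + 1) * (real k + \<mu> + 1) * coef \<mu> (Suc k) + coef \<mu> k) * y ^ k"
      by (simp add: g_def diffs_def algebra_simps)
    also have "\<dots> = 0"
      using pos assms by (simp add: coef_Suc)
    finally show "g k + (\<mu> + 1) * (diffs (coef \<mu>) k * y ^ k) + coef \<mu> k * y ^ k = 0" .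
  qed
  ultimately show ?thesis using sums_unique sums_zero by (metis sums_unique2)
qed

definition u :: "real \<Rightarrow> real \<Rightarrow> real" where
  "u \<mu> x = x powr (\<mu> + 1/2) * S \<mu> (x^2/4)"
definition up :: "real \<Rightarrow> real \<Rightarrow> real" where
  "up \<mu> x = (\<mu> + 1/2) * (x powr (\<mu> + 1/2)) / x * S \<mu> (x^2/4)
              + x powr (\<mu> + 1/2) * x / 2 * S1 \<mu> (x^2/4)"

lemma powr_m1: "x > 0 \<Longrightarrow> x powr (a - 1) = x powr a / (x::real)"
  by (simp add: powr_diff)

lemma dcong: "(f has_real_derivative a) F \<Longrightarrow> a = b \<Longrightarrow> (f has_real_derivative b) F"
  by simp

lemma powr_half: "x > 0 \<Longrightarrow> x powr (a - 1/2) = x powr (a + 1/2) / (x::real)"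
  using powr_m1[of x "a + 1/2"] by (simp add: algebra_simps)

lemma dpow:
  assumes "x > 0"
  shows "((\<lambda>x. x powr (\<mu> + 1/2)) has_real_derivative (\<mu> + 1/2) * (x powr (\<mu> + 1/2)) / x) (at x)"
  using has_real_derivative_powr[OF assms, of "\<mu> + 1/2"] assms
  by (simp add: powr_half)

lemma dsq: "((\<lambda>x. x^2/4) has_real_derivative x / 2) (at (x::real))"
  by (auto intro!: derivative_eq_intros)

lemma u_deriv:
  assumes "\<mu> \<ge> -1/2" "x > 0"
  shows "(u \<mu> has_real_derivative up \<mu> x) (at x)"
proof -
  have "((\<lambda>x. x powr (\<mu> + 1/2) * S \<mu> (x^2/4)) has_real_derivative
     (\<mu> + 1/2) * (x powr (\<mu> + 1/2)) / x * S \<mu> (x^2/4) + x powr (\<mu> + 1/2) * (S1 \<mu> (x^2/4) * (x / 2))) (at x)"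
    by (rule dcong[OF DERIV_mult[OF dpow[OF assms(2)] S_chain[OF assms(1) dsq]]]) (simp add: algebra_simps)
  then show ?thesis unfolding u_def[abs_def] up_def
    by (simp add: algebra_simps)
qed

lemma up_deriv:
  assumes "\<mu> \<ge> -1/2" "x > 0"
  shows "(up \<mu> has_real_derivative -(1 + (1/4 - \<mu>^2) / x^2) * u \<mu> x) (at x)"
proof -
  define P where "P = x powr (\<mu> + 1/2)"
  have dP: "((\<lambda>x. x powr (\<mu> + 1/2)) has_real_derivative (\<mu> + 1/2) * P / x) (at x)"
    using dpow[OF assms(2)] by (simp add: P_def)
  have dPx: "((\<lambda>x. (\<mu> + 1/2) * x powr (\<mu> + 1/2) / x) has_real_derivative
      (\<mu> + 1/2) * (((\<mu> + 1/2) * P / x) * x - P * 1) / (x * x)) (at x)"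
    using DERIV_cmult[OF DERIV_divide[OF dP DERIV_ident], of "\<mu> + 1/2"] assms
    by (simp add: P_def times_divide_eq_right)
  have t1: "((\<lambda>x. (\<mu> + 1/2) * x powr (\<mu> + 1/2) / x * S \<mu> (x^2/4)) has_real_derivative
      (\<mu> + 1/2) * (((\<mu> + 1/2) * P / x) * x - P * 1) / (x * x) * S \<mu> (x^2/4)
      + (\<mu> + 1/2) * P / x * (S1 \<mu> (x^2/4) * (x / 2))) (at x)"
    by (rule dcong[OF DERIV_mult[OF dPx S_chain[OF assms(1) dsq]]]) (simp add: P_def algebra_simps)
  have dPx2: "((\<lambda>x. x powr (\<mu> + 1/2) * x / 2) has_real_derivative
      ((\<mu> + 1/2) * P / x * x + P * 1) / 2) (at x)"
    by (rule dcong[OF DERIV_divide[OF DERIV_mult[OF dP DERIV_ident] DERIV_const, of 2]]) (use assms in \<open>simp_all add: P_def\<close>)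
  have t2: "((\<lambda>x. x powr (\<mu> + 1/2) * x / 2 * S1 \<mu> (x^2/4)) has_real_derivative
      ((\<mu> + 1/2) * P / x * x + P * 1) / 2 * S1 \<mu> (x^2/4) + P * x / 2 * (S2 \<mu> (x^2/4) * (x / 2))) (at x)"
    by (rule dcong[OF DERIV_mult[OF dPx2 S1_chain[OF assms(1) dsq]]]) (simp add: P_def algebra_simps)
  have d: "(up \<mu> has_real_derivative
      ((\<mu> + 1/2) * (((\<mu> + 1/2) * P / x) * x - P * 1) / (x * x) * S \<mu> (x^2/4)
      + (\<mu> + 1/2) * P / x * (S1 \<mu> (x^2/4) * (x / 2)))
    + (((\<mu> + 1/2) * P / x * x + P * 1) / 2 * S1 \<mu> (x^2/4) + P * x / 2 * (S2 \<mu> (x^2/4) * (x / 2)))) (at x)"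
    unfolding up_def[abs_def] by (rule DERIV_add[OF t1 t2])
  have ode: "x^2/4 * S2 \<mu> (x^2/4) = - (\<mu> + 1) * S1 \<mu> (x^2/4) - S \<mu> (x^2/4)"
    using S_ode[OF assms(1), of "x^2/4"] by (simp add: algebra_simps)
  have e: "S2 \<mu> (x^2/4) = (- (\<mu> + 1) * S1 \<mu> (x^2/4) - S \<mu> (x^2/4)) * 4 / x^2"
    using ode assms by (simp add: field_simps)
  show ?thesis
    apply (rule dcong[OF d])
    unfolding e u_def P_def[symmetric] using assms
    by (simp add: field_simps power2_eq_square)
qed

definition Phi :: "real \<Rightarrow> real \<Rightarrow> real" where
  "Phi \<nu> y = 2 * \<nu> * S \<nu> y * S (-\<nu>) y + 2 * y * (S (-\<nu>) y * S1 \<nu> y - S \<nu> y * S1 (-\<nu>) y)"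

lemma Phi_deriv:
  assumes "0 \<le> \<nu>" "\<nu> \<le> 1/2"
  shows "(Phi \<nu> has_real_derivative 0) (at y)"
proof -
  have h1: "\<nu> \<ge> -1/2" "-\<nu> \<ge> -1/2" using assms by auto
  note o1 = S_ode[OF h1(1), of y] and o2 = S_ode[OF h1(2), of y]
  show ?thesis
    unfolding Phi_def[abs_def]
    apply (rule dcong)
     apply (rule derivative_eq_intros S_deriv[OF h1(1)] S_deriv[OF h1(2)] S1_deriv[OF h1(1)] S1_deriv[OF h1(2)] refl)+
    using o1 o2 by algebra
qed

lemma S_zero: "S \<mu> 0 = rGamma (\<mu> + 1)"
  unfolding S_def using powser_zero[of "coef \<mu>"] by (simp add: coef_def)

lemma rGamma_refl_real: "rGamma (x::real) * rGamma (1 - x) = sin (pi * x) / pi"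
proof -
  have "complex_of_real (rGamma x * rGamma (1 - x)) = complex_of_real (sin (pi * x) / pi)"
    using rGamma_reflection_complex[of "complex_of_real x"]
    by (simp add: rGamma_complex_of_real[symmetric] sin_of_real[symmetric])
  then show ?thesis by (simp only: of_real_eq_iff)
qed

lemma Phi_const:
  assumes "0 \<le> \<nu>" "\<nu> \<le> 1/2"
  shows "Phi \<nu> y = 2 * sin (pi * \<nu>) / pi"
proof -
  have "Phi \<nu> y = Phi \<nu> 0"
    by (rule DERIV_isconst_all) (use Phi_deriv[OF assms] in blast)
  also have "\<dots> = 2 * (\<nu> * rGamma (\<nu> + 1)) * rGamma (1 - \<nu>)"
    by (simp add: Phi_def S_zero add.commute)
  also have "\<nu> * rGamma (\<nu> + 1) = rGamma \<nu>" by (rule rGamma_plus1)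
  finally show ?thesis using rGamma_refl_real[of \<nu>] by simp
qed

lemma wronski:
  assumes "0 \<le> \<nu>" "\<nu> \<le> 1/2" "x > 0"
  shows "u (-\<nu>) x * up \<nu> x - u \<nu> x * up (-\<nu>) x = 2 * sin (pi * \<nu>) / pi"
proof -
  have p: "x powr (-\<nu> + 1/2) * x powr (\<nu> + 1/2) = x"
    using assms by (simp add: powr_add[symmetric])
  have "u (-\<nu>) x * up \<nu> x - u \<nu> x * up (-\<nu>) x
      = (x powr (-\<nu> + 1/2) * x powr (\<nu> + 1/2)) * (2 * \<nu> * S \<nu> (x^2/4) * S (-\<nu>) (x^2/4) / x
          + x / 2 * (S (-\<nu>) (x^2/4) * S1 \<nu> (x^2/4) - S \<nu> (x^2/4) * S1 (-\<nu>) (x^2/4)))"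
    unfolding u_def up_def using assms by (simp add: field_simps)
  also have "\<dots> = Phi \<nu> (x^2/4)"
    unfolding p Phi_def using assms by (simp add: field_simps power2_eq_square)
  finally show ?thesis using Phi_const[OF assms(1,2)] by simp
qed

lemma nu_sq: assumes "0 \<le> \<nu>" "\<nu> \<le> 1/2" shows "1/4 - \<nu>^2 \<ge> (0::real)"
proof -
  have "\<nu> * \<nu> \<le> (1/2) * (1/2)" using assms by (intro mult_mono) auto
  then show ?thesis by (simp add: power2_eq_square)
qed

lemma energy:
  assumes "0 \<le> \<nu>" "\<nu> \<le> 1/2" "0 < a" "a \<le> b"
  shows "\<bar>u (-\<nu>) a * u \<nu> b - u \<nu> a * u (-\<nu>) b\<bar> \<le> 2 * sin (pi * \<nu>) / pi"
proof -
  define c where "c = 2 * sin (pi * \<nu>) / pi"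
  define h where "h t = u (-\<nu>) a * u \<nu> t - u \<nu> a * u (-\<nu>) t" for t
  define hp where "hp t = u (-\<nu>) a * up \<nu> t - u \<nu> a * up (-\<nu>) t" for t
  define q where "q t = 1 + (1/4 - \<nu>^2) / t^2" for t :: real
  define E where "E t = (hp t)^2 + q t * (h t)^2" for t
  have h1: "\<nu> \<ge> -1/2" "-\<nu> \<ge> -1/2" using assms by auto
  have dh: "(h has_real_derivative hp t) (at t)" if "t > 0" for t
    unfolding h_def[abs_def] hp_def
    by (intro DERIV_diff DERIV_cmult u_deriv h1 that)
  have dhp: "(hp has_real_derivative - q t * h t) (at t)" if "t > 0" for t
  proof -
    have "(hp has_real_derivative u (-\<nu>) a * (-(1 + (1/4 - \<nu>^2) / t^2) * u \<nu> t)
          - u \<nu> a * (-(1 + (1/4 - (-\<nu>)^2) / t^2) * u (-\<nu>) t)) (at t)"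
      unfolding hp_def[abs_def]
      by (intro DERIV_diff DERIV_cmult up_deriv h1 that)
    then show ?thesis by (rule dcong) (use that in \<open>simp add: q_def h_def field_simps\<close>)
  qed
  have dq: "(q has_real_derivative - 2 * (1/4 - \<nu>^2) / t^3) (at t)" if "t > 0" for t
  proof -
    have "(q has_real_derivative 0 + (0 * t^2 - (1/4 - \<nu>^2) * (real 2 * t ^ (2 - Suc 0))) / (t^2 * t^2)) (at t)"
      unfolding q_def[abs_def]
      by (rule DERIV_add[OF DERIV_const DERIV_divide[OF DERIV_const DERIV_pow]]) (use that in simp)
    then show ?thesis by (rule dcong) (use that in \<open>simp add: field_simps power2_eq_square power3_eq_cube\<close>)
  qed
  have dE: "\<exists>y. (E has_real_derivative y) (at t) \<and> y \<le> 0" if "a \<le> t" for t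
  proof -
    have t: "t > 0" using that assms by simp
    have "(E has_real_derivative 2 * hp t * (- q t * h t) + (- 2 * (1/4 - \<nu>^2) / t^3 * (h t)^2 + q t * (2 * h t * hp t))) (at t)"
      unfolding E_def[abs_def]
      apply (rule dcong)
       apply (rule derivative_eq_intros dh[OF t] dhp[OF t] dq[OF t] refl)+
      by (simp add: algebra_simps)
    moreover have "2 * hp t * (- q t * h t) + (- 2 * (1/4 - \<nu>^2) / t^3 * (h t)^2 + q t * (2 * h t * hp t))
        = - (2 * (1/4 - \<nu>^2) / t^3 * (h t)^2)" using t by (simp add: field_simps)
    moreover have "2 * (1/4 - \<nu>^2) / t^3 * (h t)^2 \<ge> 0"
    proof -
      have "1/4 - \<nu>^2 \<ge> 0" by (rule nu_sq[OF assms(1,2)])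
      then show ?thesis using t by (intro mult_nonneg_nonneg divide_nonneg_pos) auto
    qed
    ultimately show ?thesis by auto
  qed
  have "E b \<le> E a"
    by (rule DERIV_nonpos_imp_nonincreasing[OF assms(4)]) (use dE in auto)
  moreover have "E a = c^2"
    using wronski[OF assms(1,2,3)] by (simp add: E_def h_def hp_def c_def)
  moreover have "(h b)^2 \<le> E b"
  proof -
    have "1/4 - \<nu>^2 \<ge> 0" by (rule nu_sq[OF assms(1,2)])
    then have "(1/4 - \<nu>^2) / b^2 \<ge> 0" by simp
    then have "q b \<ge> 1" unfolding q_def by linarith
    then have "(h b)^2 \<le> q b * (h b)^2" by (simp add: mult_le_cancel_right1)
    then show ?thesis unfolding E_def by (simp add: add_increasing)
  qed
  ultimately have hc: "(h b)^2 \<le> c^2" by linarith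
  have "c \<ge> 0" unfolding c_def using assms by (intro divide_nonneg_pos mult_nonneg_nonneg sin_ge_zero) auto
  have "sqrt ((h b)^2) \<le> sqrt (c^2)" by (intro real_sqrt_le_mono hc)
  then have "\<bar>h b\<bar> \<le> c" using \<open>c \<ge> 0\<close> by simp
  then show ?thesis by (simp add: h_def c_def)
qed

lemma bessel_u:
  assumes "x > 0"
  shows "sqrt x * bessel_J \<mu> x = u \<mu> x / 2 powr \<mu>"
proof -
  have "(\<lambda>k. (-1) ^ k * rGamma (real k + \<mu> + 1) / fact k * (x / 2) ^ (2 * k)) = (\<lambda>k. coef \<mu> k * (x^2/4) ^ k)"
    by (simp add: coef_def power_mult power_divide)
  then have "bessel_J \<mu> x = (x/2) powr \<mu> * S \<mu> (x^2/4)"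
    using assms by (simp add: bessel_J_def S_def)
  moreover have "sqrt x * (x/2) powr \<mu> = x powr (\<mu> + 1/2) / 2 powr \<mu>"
    using assms by (simp add: powr_half_sqrt[symmetric] powr_divide powr_add)
  ultimately show ?thesis unfolding u_def by (simp add: mult.assoc[symmetric])
qed

theorem mainTheorem6:
  fixes x1 x2 \<nu> :: real
  assumes "x1 \<ge> 0" and "x2 \<ge> 0" and "0 \<le> \<nu>" and "\<nu> \<le> 1 / 2"
  shows "sqrt (x1 * x2) *
           \<bar>bessel_J (-\<nu>) x1 * bessel_J \<nu> x2 - bessel_J (-\<nu>) x2 * bessel_J \<nu> x1\<bar>
         \<le> 2 / pi * sin (pi * \<nu>)"
proof -
  have c0: "2 / pi * sin (pi * \<nu>) \<ge> 0"
    using assms by (intro mult_nonneg_nonneg sin_ge_zero) auto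
  show ?thesis
  proof (cases "x1 = 0 \<or> x2 = 0")
    case True
    then show ?thesis using c0 by auto
  next
    case False
    then have p1: "x1 > 0" and p2: "x2 > 0" using assms by auto
    have k: "2 powr (-\<nu>) * 2 powr \<nu> = 1" by (simp add: powr_add[symmetric])
    have "sqrt (x1 * x2) *
           \<bar>bessel_J (-\<nu>) x1 * bessel_J \<nu> x2 - bessel_J (-\<nu>) x2 * bessel_J \<nu> x1\<bar>
        = \<bar>(sqrt x1 * bessel_J (-\<nu>) x1) * (sqrt x2 * bessel_J \<nu> x2)
            - (sqrt x2 * bessel_J (-\<nu>) x2) * (sqrt x1 * bessel_J \<nu> x1)\<bar>"
    proof -
      have "sqrt (x1 * x2) = \<bar>sqrt x1 * sqrt x2\<bar>" using assms by (simp add: real_sqrt_mult abs_mult)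
      then have "sqrt (x1 * x2) *
           \<bar>bessel_J (-\<nu>) x1 * bessel_J \<nu> x2 - bessel_J (-\<nu>) x2 * bessel_J \<nu> x1\<bar>
         = \<bar>(sqrt x1 * sqrt x2) * (bessel_J (-\<nu>) x1 * bessel_J \<nu> x2 - bessel_J (-\<nu>) x2 * bessel_J \<nu> x1)\<bar>"
        by (simp only: abs_mult)
      then show ?thesis by (simp add: algebra_simps)
    qed
    also have "\<dots> = \<bar>(u (-\<nu>) x1 * u \<nu> x2 - u (-\<nu>) x2 * u \<nu> x1) / (2 powr (-\<nu>) * 2 powr \<nu>)\<bar>"
      unfolding bessel_u[OF p1] bessel_u[OF p2] by (simp add: field_simps)
    also have "\<dots> = \<bar>u (-\<nu>) x1 * u \<nu> x2 - u \<nu> x1 * u (-\<nu>) x2\<bar>"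
      unfolding k by (simp add: mult.commute)
    also have "\<dots> \<le> 2 * sin (pi * \<nu>) / pi"
    proof (cases "x1 \<le> x2")
      case True
      then show ?thesis using energy[OF assms(3,4) p1 True] by simp
    next
      case False
      then have "x2 \<le> x1" by simp
      from energy[OF assms(3,4) p2 this] show ?thesis by (simp add: abs_minus_commute mult.commute)
    qed
    finally show ?thesis by simp
  qed
qed

end
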